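(* Let $0<a<1/2$, $0\le c\le\sqrt2$, $A\in\{0,1\}$, and let $J,K,M\ge0$ be constants. Then the integral $$\int_0^\infty\int_{-\infty}^\infty s^J\sqrt{a^2+v^2}^{\,-M}\sqrt{(s^2+1/2-a)^2+v^2}^{\,-K}\sqrt{(s^2+1-a-sc)^2+v^2}^{\,-A}\,dv\,ds$$ converges provided $J-2K-2A<-1$ and $J-2K-2A+1-2M<-2$. *)

theory Defs
  imports "HOL-Analysis.Analysis"
begin

end

theory Submission
  imports Defs "HOL-Analysis.Analysis"
begin

lemma int_tail:
  fixes p :: real assumes "p < -1"
  shows "integrable lborel (\<lambda>x::real. indicator {1..} x * x powr p)"
proof -
  have "(\<lambda>x::real. x powr p) integrable_on {1..}"
    using has_integral_powr_to_inf[OF assms, of 1] unfolding integrable_on_def by auto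
  then have "(\<lambda>x::real. x powr p) absolutely_integrable_on {1..}"
    by (rule nonnegative_absolutely_integrable_1) auto
  then have "integrable lebesgue (\<lambda>x::real. indicator {1..} x *\<^sub>R x powr p)"
    by (simp add: absolutely_integrable_on_def set_integrable_def)
  then have "integrable lborel (\<lambda>x::real. indicator {1..} x *\<^sub>R x powr p)"
    by (subst (asm) integrable_completion) auto
  then show ?thesis by simp
qed

lemma int_box: "integrable lborel (\<lambda>x::real. indicator {l..u} x :: real)"
  by (rule integrable_real_indicator) (auto simp: emeasure_lborel_Icc_eq)

lemma int_g:
  fixes J al :: real assumes "0 \<le> J" "0 \<le> al" "J - 2*al < -1"
  shows "integrable lborel (\<lambda>s::real. indicator {0<..} s * (s powr J * (1+s^2) powr (-al)))"
proof (rule Bochner_Integration.integrable_bound)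
  show "integrable lborel (\<lambda>s::real. indicator {0..1} s + indicator {1..} s * s powr (J - 2*al))"
    using int_tail[OF assms(3)] int_box by (intro Bochner_Integration.integrable_add) auto
  show "(\<lambda>s::real. indicator {0<..} s * (s powr J * (1+s^2) powr (-al))) \<in> borel_measurable lborel"
    by measurable
  show "AE s in lborel. norm (indicator {0<..} s * (s powr J * (1+s^2) powr (-al)) :: real)
     \<le> norm (indicator {0..1} s + indicator {1..} s * s powr (J - 2*al) :: real)"
  proof (intro AE_I2)
    fix s :: real
    consider "s \<le> 0" | "0 < s" "s \<le> 1" | "1 < s" by linarith
    then show "norm (indicator {0<..} s * (s powr J * (1+s^2) powr (-al)) :: real)
     \<le> norm (indicator {0..1} s + indicator {1..} s * s powr (J - 2*al) :: real)"
    proof cases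
      case 1 then show ?thesis by (simp add: indicator_def)
    next
      case 2
      have a: "s powr J \<le> 1" using 2 assms by (intro powr_le1) auto
      have "1 \<le> (1+s^2) powr al" using assms by (intro ge_one_powr_ge_zero) auto
      then have b: "(1+s^2) powr (-al) \<le> 1"
        by (simp add: powr_minus_divide divide_le_eq_1)
      have "s powr J * (1+s^2) powr (-al) \<le> 1 * 1"
        by (rule mult_mono[OF a b]) auto
      note x = this
      have y: "0 \<le> indicator {1..} s * s powr (J - 2*al)" by simp
      have z: "0 \<le> s powr J * (1+s^2) powr (-al)" by simp
      have e: "indicator {0<..} s = (1::real)" "indicator {0..1} s = (1::real)"
        using 2 by (auto simp: indicator_def)
      have w: "s powr J * (1+s^2) powr (-al) \<le> 1 + indicator {1..} s * s powr (J - 2*al)"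
        using x y by (intro order_trans[OF x]) simp
      have nA: "norm (indicator {0<..} s * (s powr J * (1+s^2) powr (-al)) :: real) = s powr J * (1+s^2) powr (-al)"
        using z e by simp
      have nB: "norm (indicator {0..1} s + indicator {1..} s * s powr (J - 2*al) :: real) = 1 + indicator {1..} s * s powr (J - 2*al)"
        using y e by simp
      show ?thesis unfolding nA nB by (rule w)
    next
      case 3
      have b: "(1+s^2) powr (-al) \<le> (s^2) powr (-al)"
        using 3 assms by (intro powr_mono2') auto
      have "(s^2) powr (-al) = s powr (-2*al)"
      proof -
        have "s^2 = s powr 2" using 3 by simp
        then have "(s^2) powr (-al) = (s powr 2) powr (-al)" by simp
        also have "\<dots> = s powr (-2*al)" by (simp only: powr_powr) simp
        finally show ?thesis .
      qed
      then have "s powr J * (1+s^2) powr (-al) \<le> s powr J * s powr (-2*al)"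
        using b by (intro mult_left_mono) auto
      also have "\<dots> = s powr (J - 2*al)" by (simp add: powr_add[symmetric])
      finally show ?thesis using 3 by (simp add: indicator_def)
    qed
  qed
qed

lemma int_h:
  fixes b :: real assumes "1 < b"
  shows "integrable lborel (\<lambda>v::real. (1 + \<bar>v\<bar>) powr (-b))"
proof (rule Bochner_Integration.integrable_bound)
  have p: "-b < -1" using assms by simp
  have t2: "integrable lborel (\<lambda>x::real. indicator {1..} (-x) * (-x) powr (-b))"
    using int_tail[OF p] lborel_integrable_real_affine_iff[of "-1" "\<lambda>x::real. indicator {1..} x * x powr (-b)" 0]
    by simp
  show "integrable lborel (\<lambda>v::real. indicator {-1..1} v + indicator {1..} v * v powr (-b)
        + indicator {1..} (-v) * (-v) powr (-b))"
    using int_tail[OF p] int_box t2 by (intro Bochner_Integration.integrable_add) auto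
  show "(\<lambda>v::real. (1 + \<bar>v\<bar>) powr (-b)) \<in> borel_measurable lborel"
    by measurable
  show "AE v in lborel. norm ((1 + \<bar>v\<bar>) powr (-b) :: real) \<le> norm (indicator {-1..1} v + indicator {1..} v * v powr (-b)
        + indicator {1..} (-v) * (-v) powr (-b) :: real)"
  proof (intro AE_I2)
    fix v :: real
    have m: "(1 + \<bar>v\<bar>) powr (-b) \<le> \<bar>v\<bar> powr (-b)" if "1 \<le> \<bar>v\<bar>"
      using that assms by (intro powr_mono2') auto
    have "1 \<le> (1 + \<bar>v\<bar>) powr b" using assms by (intro ge_one_powr_ge_zero) auto
    then have le1: "(1 + \<bar>v\<bar>) powr (-b) \<le> 1"
      by (simp add: powr_minus_divide divide_le_eq_1)
    have L0: "0 \<le> (1 + \<bar>v\<bar>) powr (-b)" by simp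
    have nn: "0 \<le> indicator {1..} v * v powr (-b)" "0 \<le> indicator {1..} (-v) * (-v) powr (-b)"
      by auto
    consider "\<bar>v\<bar> \<le> 1" | "1 < v" | "v < -1" by linarith
    then show "norm ((1 + \<bar>v\<bar>) powr (-b) :: real) \<le> norm (indicator {-1..1} v + indicator {1..} v * v powr (-b)
        + indicator {1..} (-v) * (-v) powr (-b) :: real)"
    proof cases
      case 1
      then have e1: "indicator {-1..1} v = (1::real)" by (simp add: indicator_def abs_le_iff)
      have R0: "0 \<le> indicator {-1..1} v + indicator {1..} v * v powr (-b)
        + indicator {1..} (-v) * (-v) powr (-b)" by simp
      have "(1 + \<bar>v\<bar>) powr (-b) \<le> indicator {-1..1} v + indicator {1..} v * v powr (-b)
        + indicator {1..} (-v) * (-v) powr (-b)" unfolding e1 using le1 nn by (intro order_trans[OF le1]) simp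
      then show ?thesis using R0 L0 by (simp only: real_norm_def abs_of_nonneg)
    next
      case 2 then show ?thesis using m by (simp add: indicator_def)
    next
      case 3 then show ?thesis using m by (simp add: indicator_def)
    qed
  qed
qed

lemma int_prod:
  fixes g h :: "real \<Rightarrow> real"
  assumes "integrable lborel g" "integrable lborel h"
  shows "integrable lborel (\<lambda>x::real\<times>real. g (fst x) * h (snd x))"
proof -
    have gm[measurable]: "g \<in> borel_measurable lborel" using assms by auto
  have hm[measurable]: "h \<in> borel_measurable lborel" using assms by auto
  have "integrable (lborel \<Otimes>\<^sub>M lborel) (\<lambda>x::real\<times>real. g (fst x) * h (snd x))"
  proof (rule lborel_pair.Fubini_integrable)
    show "(\<lambda>x::real\<times>real. g (fst x) * h (snd x)) \<in> borel_measurable (lborel \<Otimes>\<^sub>M lborel)"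
      by measurable
    have "(\<lambda>x. \<integral> y. norm (g x * h y) \<partial>lborel) = (\<lambda>x. norm (g x) * (\<integral> y. norm (h y) \<partial>lborel))"
      by (simp add: abs_mult)
    moreover have "integrable lborel (\<lambda>x. norm (g x) * (\<integral> y. norm (h y) \<partial>lborel))"
      using assms by (intro integrable_mult_left) auto
    ultimately show "integrable lborel (\<lambda>x. \<integral> y. norm (g (fst (x,y)) * h (snd (x,y))) \<partial>lborel)"
      by simp
    show "AE x in lborel. integrable lborel (\<lambda>y. g (fst (x,y)) * h (snd (x,y)))"
      using assms by (intro AE_I2) (auto intro: integrable_mult_right)
  qed
  then show ?thesis by (simp add: lborel_prod)
qed

lemma sqrt_lb:
  fixes d t P v :: real
  assumes "0 < d" "d \<le> 1" "d*(1+t) \<le> P" "0 \<le> t"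
  shows "d/2*(1+t+\<bar>v\<bar>) \<le> sqrt (P^2+v^2)"
proof -
  have 1: "P \<le> sqrt (P^2+v^2)" by (rule real_sqrt_sum_squares_ge1)
  have 2: "\<bar>v\<bar> \<le> sqrt (P^2+v^2)"
    using real_sqrt_sum_squares_ge2[of "\<bar>v\<bar>" P] by simp
  have 3: "d * \<bar>v\<bar> \<le> \<bar>v\<bar>" using assms by (simp add: mult_left_le_one_le)
  have "d/2*(1+t+\<bar>v\<bar>) = (d*(1+t) + d*\<bar>v\<bar>)/2" by (simp add: algebra_simps)
  also have "\<dots> \<le> (P + \<bar>v\<bar>)/2" using 3 assms by simp
  also have "\<dots> \<le> sqrt (P^2+v^2)" using add_mono[OF 1 2] by simp
  finally show ?thesis .
qed

lemma quad_lb: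
  fixes a c s :: real
  assumes "0 < a" "a < 1/2" "0 \<le> c" "c \<le> sqrt 2" "0 < s"
  shows "(1-2*a)/4*(1+s^2) \<le> s^2 + 1 - a - s*c"
proof -
  have sq: "sqrt 2 * sqrt 2 = 2" by simp
  have idq: "(3+2*a)*((3+2*a)* s^2 - 4* sqrt 2* s + (3-2*a)) = ((3+2*a)* s - 2* sqrt 2)^2 + (1-4*a^2)"
    by (simp add: power2_eq_square algebra_simps sq)
  have "a*a \<le> 1/2*(1/2)" using assms by (intro mult_mono) auto
  then have "0 \<le> 1 - 4*a^2" by (simp add: power2_eq_square)
  then have "0 \<le> (3+2*a)*((3+2*a)* s^2 - 4* sqrt 2* s + (3-2*a))" unfolding idq by simp
  then have q: "0 \<le> (3+2*a)* s^2 - 4* sqrt 2* s + (3-2*a)" using assms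
    by (simp add: zero_le_mult_iff)
  have sc: "s*c \<le> s* sqrt 2" using assms by (intro mult_left_mono) auto
  have e: "s^2 + 1 - a - s * c - (1-2*a)/4*(1+s^2) = ((3+2*a)* s^2 - 4* sqrt 2* s + (3-2*a))/4 + (s * sqrt 2 - s * c)"
    by (simp add: field_simps power2_eq_square)
  have "0 \<le> ((3+2*a)* s^2 - 4* sqrt 2* s + (3-2*a))/4 + (s * sqrt 2 - s * c)"
    using q sc by simp
  then show ?thesis using e by simp
qed

lemma pw_le: "0 \<le> e \<Longrightarrow> 0 < x \<Longrightarrow> x \<le> y \<Longrightarrow> y powr (-e) \<le> x powr (-e)"
  for e x y :: real by (intro powr_mono2') auto

theorem lemma5p4:
  fixes a c A J K M :: real
  assumes "0 < a" "a < 1/2" "0 \<le> c" "c \<le> sqrt 2" "A \<in> {0, 1}"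
    and "0 \<le> J" "0 \<le> K" "0 \<le> M"
    and "J - 2*K - 2*A < -1" "J - 2*K - 2*A + 1 - 2*M < -2"
  shows "set_integrable lborel ({0<..} \<times> (UNIV :: real set))
           (\<lambda>(s::real, v::real). s powr J * sqrt (a^2 + v^2) powr (-M)
              * sqrt ((s^2 + 1/2 - a)^2 + v^2) powr (-K)
              * sqrt ((s^2 + 1 - a - s*c)^2 + v^2) powr (-A))"
proof -
  define F where "F = (\<lambda>s v::real. s powr J * sqrt (a^2 + v^2) powr (-M)
              * sqrt ((s^2 + 1/2 - a)^2 + v^2) powr (-K)
              * sqrt ((s^2 + 1 - a - s*c)^2 + v^2) powr (-A))"
  have A01: "0 \<le> A" "A \<le> 1" using assms(5) by auto
  define L where "L = K + A"
  define m where "m = min L (M + L - 1)"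
  define al where "al = ((J+1)/2 + m)/2"
  define be where "be = M + L - al"
  have mgt: "(J+1)/2 < m" using assms(9,10) unfolding m_def L_def by auto
  have al0: "0 \<le> al" using mgt assms(6) unfolding al_def by simp
  have mL: "m \<le> L" and mM: "m \<le> M + L - 1" unfolding m_def by auto
  have alm: "al < m" using mgt unfolding al_def by simp
  have alL: "al \<le> L" using alm mL by simp
  have al2: "2*al = (J+1)/2 + m" unfolding al_def by simp
  have Jal: "J - 2*al < -1" using mgt al2 by argo
  have be1: "1 < be" using alm mM unfolding be_def by simp
  define d1 where "d1 = min a 1"
  define d2 where "d2 = 1/2 - a"
  define d3 where "d3 = (1-2*a)/4"
  have d1: "0 < d1" "d1 \<le> 1" using assms(1) unfolding d1_def by auto
  have d2: "0 < d2" "d2 \<le> 1" using assms(1,2) unfolding d2_def by auto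
  have d3: "0 < d3" "d3 \<le> 1" using assms(1,2) unfolding d3_def by auto
  define C where "C = (d1/2) powr (-M) * ((d2/2) powr (-K) * (d3/2) powr (-A))"
  have C0: "0 \<le> C" unfolding C_def by simp
  define g where "g = (\<lambda>s::real. indicator {0<..} s * (s powr J * (1+s^2) powr (-al)))"
  define h where "h = (\<lambda>v::real. (1+\<bar>v\<bar>) powr (-be))"
  have key: "F s v \<le> C * (g s * h v)" if s: "0 < s" for s v :: real
  proof -
    define U where "U = 1 + \<bar>v\<bar>"
    define W where "W = 1 + s^2 + \<bar>v\<bar>"
    have U0: "0 < U" unfolding U_def by simp
    have W0: "0 < W" unfolding W_def by (simp add: add_pos_nonneg)
    have l1: "d1/2*U \<le> sqrt (a^2+v^2)"
      using sqrt_lb[of d1 0 a v] d1 unfolding U_def d1_def by simp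
    have p2: "d2*(1+s^2) \<le> s^2 + 1/2 - a"
    proof -
      have "d2 * s^2 \<le> s^2" using d2 by (simp add: mult_left_le_one_le)
      then show ?thesis unfolding d2_def by (simp add: algebra_simps)
    qed
    have l2: "d2/2*W \<le> sqrt ((s^2 + 1/2 - a)^2 + v^2)"
      using sqrt_lb[OF d2(1) d2(2) p2 zero_le_power2, of v] unfolding W_def .
    have p3: "d3*(1+s^2) \<le> s^2 + 1 - a - s * c" using quad_lb[OF assms(1-4) s] unfolding d3_def .
    have l3: "d3/2*W \<le> sqrt ((s^2 + 1 - a - s * c)^2 + v^2)"
      using sqrt_lb[OF d3(1) d3(2) p3 zero_le_power2, of v] unfolding W_def .
    have b1: "sqrt (a^2+v^2) powr (-M) \<le> (d1/2*U) powr (-M)"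
      by (rule pw_le[OF assms(8) _ l1]) (use d1 U0 in simp)
    have b2: "sqrt ((s^2 + 1/2 - a)^2 + v^2) powr (-K) \<le> (d2/2*W) powr (-K)"
      by (rule pw_le[OF assms(7) _ l2]) (use d2 W0 in simp)
    have b3: "sqrt ((s^2 + 1 - a - s * c)^2 + v^2) powr (-A) \<le> (d3/2*W) powr (-A)"
      by (rule pw_le[OF A01(1) _ l3]) (use d3 W0 in simp)
    have m1: "s powr J * sqrt (a^2+v^2) powr (-M) \<le> s powr J * (d1/2*U) powr (-M)"
      by (rule mult_left_mono[OF b1]) simp
    have m2: "s powr J * sqrt (a^2+v^2) powr (-M) * sqrt ((s^2 + 1/2 - a)^2 + v^2) powr (-K)
       \<le> s powr J * (d1/2*U) powr (-M) * (d2/2*W) powr (-K)"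
      by (rule mult_mono[OF m1 b2]) simp_all
    have m3: "F s v \<le> s powr J * (d1/2*U) powr (-M) * (d2/2*W) powr (-K) * (d3/2*W) powr (-A)"
      unfolding F_def by (rule mult_mono[OF m2 b3]) simp_all
    have e1: "(d1/2*U) powr (-M) = (d1/2) powr (-M) * U powr (-M)"
      using d1 U0 by (intro powr_mult; simp)
    have e2: "(d2/2*W) powr (-K) = (d2/2) powr (-K) * W powr (-K)"
      using d2 W0 by (intro powr_mult; simp)
    have e3: "(d3/2*W) powr (-A) = (d3/2) powr (-A) * W powr (-A)"
      using d3 W0 by (intro powr_mult; simp)
    have e4: "W powr (-K) * W powr (-A) = W powr (-L)"
    proof -
      have "-L = -K + -A" unfolding L_def by simp
      then show ?thesis by (simp only: powr_add)
    qed
    have eqC: "s powr J * (d1/2*U) powr (-M) * (d2/2*W) powr (-K) * (d3/2*W) powr (-A)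
        = C * s powr J * U powr (-M) * (W powr (-K) * W powr (-A))"
      unfolding e1 e2 e3 C_def by (simp only: mult_ac)
    also have "\<dots> = C * s powr J * U powr (-M) * W powr (-L)" unfolding e4 ..
    finally have eqC: "s powr J * (d1/2*U) powr (-M) * (d2/2*W) powr (-K) * (d3/2*W) powr (-A)
        = C * s powr J * U powr (-M) * W powr (-L)" .
    have m4: "F s v \<le> C * s powr J * U powr (-M) * W powr (-L)"
      using order_trans[OF m3 eq_refl[OF eqC]] .
    have wl: "W powr (-L) \<le> (1+s^2) powr (-al) * U powr (-(L-al))"
    proof -
      have "-L = -al + -(L-al)" by simp
      then have "W powr (-L) = W powr (-al) * W powr (-(L-al))"
        by (simp only: powr_add)
      also have "\<dots> \<le> (1+s^2) powr (-al) * U powr (-(L-al))"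
      proof (rule mult_mono)
        show "W powr (-al) \<le> (1+s^2) powr (-al)"
          by (rule pw_le[OF al0]) (auto simp: W_def intro: add_pos_nonneg)
        show "W powr (-(L-al)) \<le> U powr (-(L-al))"
          by (rule pw_le) (use alL U0 in \<open>auto simp: W_def U_def\<close>)
      qed simp_all
      finally show ?thesis .
    qed
    have m5: "C * s powr J * U powr (-M) * W powr (-L) \<le> C * s powr J * U powr (-M) * ((1+s^2) powr (-al) * U powr (-(L-al)))"
      by (rule mult_left_mono[OF wl]) (use C0 in simp)
    have gs: "g s = s powr J * (1+s^2) powr (-al)" unfolding g_def using s by simp
    have hv: "h v = U powr (-M) * U powr (-(L-al))"
    proof -
      have "-be = -M + -(L-al)" unfolding be_def by simp
      then have "h v = U powr (-M + -(L-al))" unfolding h_def U_def by simp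
      then show ?thesis by (simp only: powr_add)
    qed
    have fin: "C * s powr J * U powr (-M) * ((1+s^2) powr (-al) * U powr (-(L-al))) = C * (g s * h v)"
      unfolding gs hv by (simp only: mult_ac)
    show ?thesis using order_trans[OF m4 m5] unfolding fin .
  qed
  have ig: "integrable lborel g" unfolding g_def using int_g[OF assms(6) al0 Jal] .
  have ih: "integrable lborel h" unfolding h_def using int_h[OF be1] .
  have iG: "integrable lborel (\<lambda>x::real\<times>real. C * (g (fst x) * h (snd x)))"
    using int_prod[OF ig ih] by (rule integrable_mult_right)
  have "integrable lborel (\<lambda>x::real\<times>real. indicator ({0<..} \<times> UNIV) x *\<^sub>R (case x of (s, v) \<Rightarrow> F s v))"
  proof (rule Bochner_Integration.integrable_bound[OF iG])
    show "(\<lambda>x::real\<times>real. indicator ({0<..} \<times> UNIV) x *\<^sub>R (case x of (s, v) \<Rightarrow> F s v)) \<in> borel_measurable lborel"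
      unfolding F_def lborel_prod[symmetric] by measurable
    show "AE x in lborel. norm (indicator ({0<..} \<times> UNIV) x *\<^sub>R (case x of (s, v) \<Rightarrow> F s v) :: real)
       \<le> norm (C * (g (fst x) * h (snd x)))"
    proof (intro AE_I2)
      fix x :: "real \<times> real"
      obtain s v where x: "x = (s, v)" by (cases x)
      have G0: "0 \<le> C * (g s * h v)" using C0 unfolding g_def h_def by simp
      show "norm (indicator ({0<..} \<times> UNIV) x *\<^sub>R (case x of (s, v) \<Rightarrow> F s v) :: real)
       \<le> norm (C * (g (fst x) * h (snd x)))"
      proof (cases "0 < s")
        case True
        have F0: "0 \<le> F s v" unfolding F_def by simp
        have "indicator ({0<..} \<times> UNIV) x = (1::real)" using True x by (simp add: indicator_def)
        then show ?thesis using key[OF True] F0 G0 x by simp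
      next
        case False
        then have "indicator ({0<..} \<times> UNIV) x = (0::real)" using x by (simp add: indicator_def)
        then show ?thesis by simp
      qed
    qed
  qed
  then show ?thesis unfolding set_integrable_def F_def .
qed

end
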